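(* Let $A\in\mathbb{R}^{m\times N}$ with $N=pn$, let $\mathbf{x}\in\mathbb{R}^N$ be arbitrary, let $k\in\{1,\dots,p\}$, let $\phi_k(\mathbf{x})=\inf_{\mathbf{z}\in\mathbb{R}^N,\lVert\mathbf{z}\rVert_{2,0}=k}\lVert\mathbf{x}-\mathbf{z}\rVert_{2,1}$, and let $\mathbf{y}=A\mathbf{x}+\boldsymbol{\epsilon}$. For any $q\in(1,\infty]$: 1) If $\lVert\boldsymbol{\epsilon}\rVert_2\le\zeta$, then the solution $\hat{\mathbf{x}}$ of the block basis pursuit $\min_{\mathbf{z}}\lVert\mathbf{z}\rVert_{2,1}$ s.t. $\lVert\mathbf{y}-A\mathbf{z}\rVert_2\le\zeta$ obeys $$\lVert\hat{\mathbf{x}}-\mathbf{x}\rVert_{2,q}\le\frac{2\zeta}{\beta_{q,4^{\frac{q}{q-1}}k}(A)}+k^{1/q-1}\phi_k(\mathbf{x}),\qquad \lVert\hat{\mathbf{x}}-\mathbf{x}\rVert_{2,1}\le\frac{4k^{1-1/q}\zeta}{\beta_{q,4^{\frac{q}{q-1}}k}(A)}+4\phi_k(\mathbf{x}).$$ 2) If $\lVert A^T\boldsymbol{\epsilon}\rVert_{2,\infty}\le\mu$, then the solution $\hat{\mathbf{x}}$ of the block Dantzig selector $\min_{\mathbf{z}}\lVert\mathbf{z}\rVert_{2,1}$ s.t. $\lVert A^T(\mathbf{y}-A\mathbf{z})\rVert_{2,\infty}\le\mu$ obeys $$\lVert\hat{\mathbf{x}}-\mathbf{x}\rVert_{2,q}\le\frac{8k^{1-1/q}}{\beta^2_{q,4^{\frac{q}{q-1}}k}(A)}\mu+k^{1/q-1}\phi_k(\mathbf{x}),\qquad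 \lVert\hat{\mathbf{x}}-\mathbf{x}\rVert_{2,1}\le\frac{16k^{2-2/q}}{\beta^2_{q,4^{\frac{q}{q-1}}k}(A)}\mu+4\phi_k(\mathbf{x}).$$ 3) If $\lVert A^T\boldsymbol{\epsilon}\rVert_{2,\infty}\le\kappa\mu$ for some $\kappa\in(0,1)$, then the solution $\hat{\mathbf{x}}$ of the group lasso $\min_{\mathbf{z}}\frac12\lVert\mathbf{y}-A\mathbf{z}\rVert_2^2+\mu\lVert\mathbf{z}\rVert_{2,1}$ obeys $$\lVert\hat{\mathbf{x}}-\mathbf{x}\rVert_{2,q}\le\frac{1+\kappa}{1-\kappa}\cdot\frac{4k^{1-1/q}}{\beta^2_{q,(\frac{4}{1-\kappa})^{\frac{q}{q-1}}k}(A)}\mu+k^{1/q-1}\phi_k(\mathbf{x}),$$ $$\lVert\hat{\mathbf{x}}-\mathbf{x}\rVert_{2,1}\le\frac{1+\kappa}{(1-\kappa)^2}\cdot\frac{8k^{2-2/q}}{\beta^2_{q,(\frac{4}{1-\kappa})^{\frac{q}{q-1}}k}(A)}\mu+\frac{4}{1-\kappa}\phi_k(\mathbf{x}).$$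
   Context: Every $\mathbf{x}\in\mathbb{R}^N$ is partitioned into $p$ consecutive blocks of length $n$: $\mathbf{x}=[\mathbf{x}_1^T,\dots,\mathbf{x}_p^T]^T$, $\mathbf{x}_i\in\mathbb{R}^n$. Mixed norms: $\lVert\mathbf{x}\rVert_{2,0}=\#\{i:\mathbf{x}_i\ne\mathbf{0}\}$, $\lVert\mathbf{x}\rVert_{2,q}=(\sum_{i=1}^p\lVert\mathbf{x}_i\rVert_2^q)^{1/q}$ for $0<q<\infty$, $\lVert\mathbf{x}\rVert_{2,\infty}=\max_i\lVert\mathbf{x}_i\rVert_2$. For nonzero $\mathbf{x}$ and $q\in(1,\infty)$, $k_q(\mathbf{x})=\left(\lVert\mathbf{x}\rVert_{2,1}/\lVert\mathbf{x}\rVert_{2,q}\right)^{q/(q-1)}$, and $k_\infty(\mathbf{x})=\lVert\mathbf{x}\rVert_{2,1}/\lVert\mathbf{x}\rVert_{2,\infty}$. For $q\in(1,\infty]$ and real $s\ge1$, $\beta_{q,s}(A)=\min_{\mathbf{z}\ne\mathbf{0},\,k_q(\mathbf{z})\le s}\lVert A\mathbf{z}\rVert_2/\lVert\mathbf{z}\rVert_{2,q}$ (the paper defines it for $s\in[1,p]$; for $s\ge p$ the constraint is vacuous since $k_q\le p$). For $q=\infty$, $q/(q-1)$ is read as $1$ and $1/q$ as $0$. The parameters $\zeta\ge0$, $\mu>0$ are given; bounds are understood as $+\infty$ when the relevant $\beta$ is $0$. *)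

theory Defs
  imports "HOL-Analysis.Analysis" "HOL-Library.Extended_Real"
begin

text \<open>Vectors of R^N are functions nat => real vanishing outside {..<N}.
  A vector of R^{p n} is split into p consecutive blocks of length n.\<close>

definition in_RN :: "nat \<Rightarrow> (nat \<Rightarrow> real) \<Rightarrow> bool" where
  "in_RN N z \<longleftrightarrow> (\<forall>j\<ge>N. z j = 0)"

definition norm2 :: "nat \<Rightarrow> (nat \<Rightarrow> real) \<Rightarrow> real" where
  "norm2 m v = sqrt (\<Sum>i<m. (v i)^2)"

definition matvec :: "nat \<Rightarrow> (nat \<Rightarrow> nat \<Rightarrow> real) \<Rightarrow> (nat \<Rightarrow> real) \<Rightarrow> (nat \<Rightarrow> real)" where
  "matvec N A z = (\<lambda>i. \<Sum>j<N. A i j * z j)"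

definition tmatvec :: "nat \<Rightarrow> (nat \<Rightarrow> nat \<Rightarrow> real) \<Rightarrow> (nat \<Rightarrow> real) \<Rightarrow> (nat \<Rightarrow> real)" where
  "tmatvec m A v = (\<lambda>j. \<Sum>i<m. A i j * v i)"

definition bnorm :: "nat \<Rightarrow> (nat \<Rightarrow> real) \<Rightarrow> nat \<Rightarrow> real" where
  "bnorm n x i = sqrt (\<Sum>j<n. (x (i * n + j))^2)"

definition norm20 :: "nat \<Rightarrow> nat \<Rightarrow> (nat \<Rightarrow> real) \<Rightarrow> nat" where
  "norm20 n p x = card {i. i < p \<and> bnorm n x i \<noteq> 0}"

definition norm21 :: "nat \<Rightarrow> nat \<Rightarrow> (nat \<Rightarrow> real) \<Rightarrow> real" where
  "norm21 n p x = (\<Sum>i<p. bnorm n x i)"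

definition mixnorm :: "nat \<Rightarrow> nat \<Rightarrow> ereal \<Rightarrow> (nat \<Rightarrow> real) \<Rightarrow> real" where
  "mixnorm n p q x =
     (if q = \<infinity> then Max (bnorm n x ` {..<p})
      else (\<Sum>i<p. bnorm n x i powr real_of_ereal q) powr (1 / real_of_ereal q))"

text \<open>q/(q-1), read as 1 for q = infinity; and 1/q, read as 0 for q = infinity.\<close>
definition qexp :: "ereal \<Rightarrow> real" where
  "qexp q = (if q = \<infinity> then 1 else real_of_ereal q / (real_of_ereal q - 1))"

definition invq :: "ereal \<Rightarrow> real" where
  "invq q = (if q = \<infinity> then 0 else 1 / real_of_ereal q)"

definition kq :: "nat \<Rightarrow> nat \<Rightarrow> ereal \<Rightarrow> (nat \<Rightarrow> real) \<Rightarrow> real" where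
  "kq n p q x = (norm21 n p x / mixnorm n p q x) powr qexp q"

text \<open>beta_{q,s}(A): the minimum (attained, written as infimum) over nonzero z in R^{pn}
  with k_q(z) <= s of ||Az||_2 / ||z||_{2,q}.\<close>
definition beta :: "nat \<Rightarrow> nat \<Rightarrow> nat \<Rightarrow> ereal \<Rightarrow> real \<Rightarrow> (nat \<Rightarrow> nat \<Rightarrow> real) \<Rightarrow> real" where
  "beta n p m q s A = Inf {norm2 m (matvec (p * n) A z) / mixnorm n p q z | z.
      in_RN (p * n) z \<and> z \<noteq> (\<lambda>_. 0) \<and> kq n p q z \<le> s}"

definition phi :: "nat \<Rightarrow> nat \<Rightarrow> nat \<Rightarrow> (nat \<Rightarrow> real) \<Rightarrow> real" where
  "phi n p k x = Inf {norm21 n p (x - z) | z. in_RN (p * n) z \<and> norm20 n p z = k}"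

definition bp_sol where
  "bp_sol n p m A y \<zeta> xh \<longleftrightarrow>
     in_RN (p * n) xh \<and> norm2 m (y - matvec (p * n) A xh) \<le> \<zeta> \<and>
     (\<forall>z. in_RN (p * n) z \<and> norm2 m (y - matvec (p * n) A z) \<le> \<zeta> \<longrightarrow>
          norm21 n p xh \<le> norm21 n p z)"

definition ds_sol where
  "ds_sol n p m A y \<mu> xh \<longleftrightarrow>
     in_RN (p * n) xh \<and> mixnorm n p \<infinity> (tmatvec m A (y - matvec (p * n) A xh)) \<le> \<mu> \<and>
     (\<forall>z. in_RN (p * n) z \<and> mixnorm n p \<infinity> (tmatvec m A (y - matvec (p * n) A z)) \<le> \<mu> \<longrightarrow>
          norm21 n p xh \<le> norm21 n p z)"

definition lasso_obj where
  "lasso_obj n p m A y \<mu> z = 1/2 * (norm2 m (y - matvec (p * n) A z))^2 + \<mu> * norm21 n p z"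

definition lasso_sol where
  "lasso_sol n p m A y \<mu> xh \<longleftrightarrow>
     in_RN (p * n) xh \<and>
     (\<forall>z. in_RN (p * n) z \<longrightarrow> lasso_obj n p m A y \<mu> xh \<le> lasso_obj n p m A y \<mu> z)"

end

theory Submission imports Defs begin

lemma bnorm_L2: "bnorm n x i = L2_set (\<lambda>j. x (i*n+j)) {..<n}"
  by (simp add: bnorm_def L2_set_def)

lemma bnorm_nonneg: "0 \<le> bnorm n x i"
  by (simp add: bnorm_def sum_nonneg)

lemma bnorm_add_le: "bnorm n (\<lambda>j. x j + y j) i \<le> bnorm n x i + bnorm n y i"
  unfolding bnorm_L2 by (rule L2_set_triangle_ineq)

lemma bnorm_uminus: "bnorm n (- x) i = bnorm n x i"
  by (simp add: bnorm_def)

lemma bnorm_diff_le: "bnorm n (x - y) i \<le> bnorm n x i + bnorm n y i"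
  using bnorm_add_le[of n x "\<lambda>j. - y j" i] bnorm_uminus[of n y i]
  by (simp add: fun_diff_def fun_Compl_def)

lemma bnorm_diff_commute: "bnorm n (x - y) i = bnorm n (y - x) i"
  by (simp add: bnorm_def fun_diff_def power2_commute)

lemma bnorm_smult: "bnorm n (\<lambda>j. c * x j) i = \<bar>c\<bar> * bnorm n x i"
  by (simp add: bnorm_def power_mult_distrib sum_distrib_left[symmetric] real_sqrt_mult)

lemma norm21_nonneg: "0 \<le> norm21 n p x"
  by (simp add: norm21_def sum_nonneg bnorm_nonneg)

lemma sum_blocks: "(\<Sum>j<(p::nat)*n. f j) = (\<Sum>i<p. \<Sum>j<n. f (i*n+j))"
proof (induction p)
  case 0 then show ?case by simp
next
  case (Suc p)
  have "(\<Sum>j<Suc p*n. f j) = (\<Sum>j<p*n + n. f j)" by (simp add: add.commute)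
  also have "\<dots> = (\<Sum>j<p*n. f j) + (\<Sum>j=p*n..<p*n+n. f j)" using sum.atLeastLessThan_concat[of 0 "p*n" "p*n+n" f] by (simp add: atLeast0LessThan)
  also have "(\<Sum>j=p*n..<p*n+n. f j) = (\<Sum>j<n. f (p*n+j))"
    using sum.shift_bounds_nat_ivl[of f 0 "p*n" n] by (simp add: atLeast0LessThan add.commute)
  finally show ?case using Suc by (simp add: add.commute)
qed


lemma bilinear: "(\<Sum>l<m. v l * matvec N A h l) = (\<Sum>j<N. h j * tmatvec m A v j)"
  unfolding matvec_def tmatvec_def
  by (simp add: sum_distrib_left sum_distrib_right mult_ac sum.swap[of _ "{..<m}"])

lemma block_cs:
  assumes "0 < p"
  shows "(\<Sum>j<p*n. h j * g j) \<le> norm21 n p h * mixnorm n p \<infinity> g"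
proof -
  define Mx where "Mx = Max (bnorm n g ` {..<p})"
  have Mx: "bnorm n g i \<le> Mx" if "i < p" for i
    unfolding Mx_def using that by (intro Max_ge) auto
  have "(\<Sum>j<p*n. h j * g j) = (\<Sum>i<p. \<Sum>j<n. h (i*n+j) * g (i*n+j))"
    by (rule sum_blocks)
  also have "\<dots> \<le> (\<Sum>i<p. bnorm n h i * bnorm n g i)"
  proof (rule sum_mono)
    fix i
    have "(\<Sum>j<n. h (i*n+j) * g (i*n+j)) \<le> (\<Sum>j<n. \<bar>h (i*n+j)\<bar> * \<bar>g (i*n+j)\<bar>)"
      by (intro sum_mono) (metis abs_ge_self abs_mult)
    also have "\<dots> \<le> bnorm n h i * bnorm n g i"
      unfolding bnorm_L2 by (rule L2_set_mult_ineq)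
    finally show "(\<Sum>j<n. h (i*n+j) * g (i*n+j)) \<le> bnorm n h i * bnorm n g i" .
  qed
  also have "\<dots> \<le> (\<Sum>i<p. bnorm n h i * Mx)"
    by (intro sum_mono mult_left_mono Mx bnorm_nonneg) auto
  also have "\<dots> = norm21 n p h * mixnorm n p \<infinity> g"
    by (simp add: norm21_def mixnorm_def Mx_def sum_distrib_right)
  finally show ?thesis .
qed

lemma holder_gen:
  fixes b :: "nat \<Rightarrow> real"
  assumes "finite S" "\<And>i. i \<in> S \<Longrightarrow> 0 \<le> b i" "1 < r"
  shows "(\<Sum>i\<in>S. b i) \<le> real (card S) powr (1 - 1/r) * (\<Sum>i\<in>S. b i powr r) powr (1/r)"
proof -
  define S' where "S' = {i\<in>S. 0 < b i}"
  have fin: "finite S'" using assms(1) by (simp add: S'_def)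
  have sub: "S' \<subseteq> S" by (auto simp: S'_def)
  have B: "(\<Sum>i\<in>S. b i) = (\<Sum>i\<in>S'. b i)"
    using assms(1,2) unfolding S'_def by (intro sum.mono_neutral_right) force+
  have P: "(\<Sum>i\<in>S'. b i powr r) \<le> (\<Sum>i\<in>S. b i powr r)"
    using assms(1) sub by (intro sum_mono2) auto
  show ?thesis
  proof (cases "S' = {}")
    case True
    then show ?thesis using B by simp
  next
    case False
    define c where "c = real (card S')"
    have cpos: "0 < c" using False fin by (simp add: c_def card_gt_0_iff)
    have "(\<Sum>i\<in>S'. (1/c) *\<^sub>R b i) powr r \<le> (\<Sum>i\<in>S'. (1/c) * b i powr r)"
      using convex_on_sum[OF fin False powr_convex[of r], of "\<lambda>_. 1/c" b] assms(3) cpos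
      by (auto simp: c_def S'_def)
    then have J: "((\<Sum>i\<in>S'. b i) / c) powr r \<le> (\<Sum>i\<in>S'. b i powr r) / c"
      by (simp add: sum_distrib_left[symmetric] sum_divide_distrib[symmetric] field_simps)
    define BB where "BB = (\<Sum>i\<in>S'. b i)"
    define PP where "PP = (\<Sum>i\<in>S'. b i powr r)"
    have BB0: "0 \<le> BB" unfolding BB_def using sub assms(2) by (intro sum_nonneg) auto
    have PP0: "0 \<le> PP" unfolding PP_def by (intro sum_nonneg) auto
    have "BB / c = ((BB / c) powr r) powr (1/r)"
      using BB0 cpos assms(3) by (simp add: powr_powr)
    also have "\<dots> \<le> (PP / c) powr (1/r)"
      using J assms(3) BB0 cpos unfolding BB_def[symmetric] PP_def[symmetric]
      by (intro powr_mono2) auto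
    also have "\<dots> = PP powr (1/r) / c powr (1/r)"
      using PP0 cpos by (simp add: powr_divide)
    finally have "BB \<le> c * (PP powr (1/r) / c powr (1/r))"
      using cpos by (simp add: field_simps)
    also have "\<dots> = c powr (1 - 1/r) * PP powr (1/r)"
      using cpos by (simp add: powr_diff)
    also have "\<dots> \<le> real (card S) powr (1 - 1/r) * (\<Sum>i\<in>S. b i powr r) powr (1/r)"
    proof (intro mult_mono powr_mono2)
      show "c \<le> real (card S)" unfolding c_def using card_mono[OF assms(1) sub] by simp
      show "PP \<le> (\<Sum>i\<in>S. b i powr r)" using P by (simp add: PP_def)
    qed (use assms(3) cpos PP0 in auto)
    finally show ?thesis using B BB_def by simp
  qed
qed


lemma q_cases:
  assumes "1 < q"
  obtains "q = \<infinity>" | r where "q = ereal r" "1 < r"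
  using assms by (cases q) auto

lemma mixnorm_nonneg: assumes "0 < p" shows "0 \<le> mixnorm n p q h"
proof (cases "q = \<infinity>")
  case True
  have "0 \<le> bnorm n h 0" by (rule bnorm_nonneg)
  also have "\<dots> \<le> Max (bnorm n h ` {..<p})" using assms by (intro Max_ge) auto
  finally show ?thesis using True by (simp add: mixnorm_def)
qed (simp add: mixnorm_def)

lemma holder_block:
  assumes "S \<subseteq> {..<p}" "card S \<le> k" "1 \<le> k" "1 < q" "0 < p"
  shows "(\<Sum>i\<in>S. bnorm n h i) \<le> real k powr (1 - invq q) * mixnorm n p q h"
  using assms(4)
proof (cases rule: q_cases)
  case 1
  define Mx where "Mx = Max (bnorm n h ` {..<p})"
  have Mx0: "0 \<le> Mx" using mixnorm_nonneg[OF assms(5), of n \<infinity> h] by (simp add: mixnorm_def Mx_def)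
  have fin: "finite S" using assms(1) finite_subset by blast
  have "(\<Sum>i\<in>S. bnorm n h i) \<le> (\<Sum>i\<in>S. Mx)"
    unfolding Mx_def using assms(1) fin by (intro sum_mono Max_ge) auto
  also have "\<dots> = real (card S) * Mx" by simp
  also have "\<dots> \<le> real k * Mx" using assms(2) Mx0 by (intro mult_right_mono) auto
  finally show ?thesis using 1 assms(3) by (simp add: invq_def mixnorm_def Mx_def)
next
  case (2 r)
  have fin: "finite S" using assms(1) finite_subset by blast
  have "(\<Sum>i\<in>S. bnorm n h i) \<le> real (card S) powr (1 - 1/r) * (\<Sum>i\<in>S. bnorm n h i powr r) powr (1/r)"
    by (rule holder_gen[OF fin bnorm_nonneg 2(2)])
  also have "\<dots> \<le> real k powr (1 - 1/r) * (\<Sum>i<p. bnorm n h i powr r) powr (1/r)"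
  proof (intro mult_mono powr_mono2)
    show "(\<Sum>i\<in>S. bnorm n h i powr r) \<le> (\<Sum>i<p. bnorm n h i powr r)"
      using assms(1) by (intro sum_mono2) auto
  qed (use 2 assms(2) in \<open>auto intro: sum_nonneg\<close>)
  finally show ?thesis using 2 by (simp add: invq_def mixnorm_def)
qed

lemma bnorm_zero_block:
  assumes "bnorm n z i = 0" "j < n"
  shows "z (i*n+j) = 0"
proof -
  have "(\<Sum>j<n. (z (i*n+j))^2) = 0" using assms(1) by (simp add: bnorm_def sum_nonneg)
  then have "\<forall>j\<in>{..<n}. (z (i*n+j))^2 = 0" by (subst (asm) sum_nonneg_eq_0_iff) auto
  then show ?thesis using assms(2) by simp
qed

lemma core:
  fixes n p :: nat and z x xh :: "nat \<Rightarrow> real"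
  defines "S \<equiv> {i. i < p \<and> bnorm n z i \<noteq> 0}"
  shows "norm21 n p x - norm21 n p xh \<le> (\<Sum>i\<in>S. bnorm n (xh - x) i)
           - (\<Sum>i\<in>{..<p}-S. bnorm n (xh - x) i) + 2 * norm21 n p (x - z)"
proof -
  have SS: "S \<subseteq> {..<p}" by (auto simp: S_def)
  have A: "bnorm n x i - bnorm n xh i \<le> bnorm n (xh - x) i" for i
  proof -
    have "xh - (xh - x) = x" by (simp add: fun_diff_def)
    then show ?thesis using bnorm_diff_le[of n xh "xh - x" i] by simp
  qed
  have B: "bnorm n x i - bnorm n xh i \<le> 2 * bnorm n (x - z) i - bnorm n (xh - x) i"
    if "i \<in> {..<p} - S" for i
  proof -
    have "bnorm n z i = 0" using that by (auto simp: S_def)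
    then have "bnorm n (x - z) i = bnorm n x i"
      using bnorm_zero_block[of n z i] by (simp add: bnorm_def fun_diff_def)
    then show ?thesis using bnorm_diff_le[of n xh x i] by simp
  qed
  have "norm21 n p x - norm21 n p xh = (\<Sum>i<p. bnorm n x i - bnorm n xh i)"
    by (simp add: norm21_def sum_subtractf)
  also have "\<dots> = (\<Sum>i\<in>S. bnorm n x i - bnorm n xh i) + (\<Sum>i\<in>{..<p}-S. bnorm n x i - bnorm n xh i)"
    using SS by (metis (no_types, lifting) add.commute finite_lessThan sum.subset_diff)
  also have "\<dots> \<le> (\<Sum>i\<in>S. bnorm n (xh - x) i) + (\<Sum>i\<in>{..<p}-S. 2 * bnorm n (x - z) i - bnorm n (xh - x) i)"
    by (intro add_mono sum_mono A B)
  also have "\<dots> = (\<Sum>i\<in>S. bnorm n (xh - x) i) - (\<Sum>i\<in>{..<p}-S. bnorm n (xh - x) i)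
       + 2 * (\<Sum>i\<in>{..<p}-S. bnorm n (x - z) i)"
    by (simp add: sum_subtractf sum_distrib_left)
  finally have X: "norm21 n p x - norm21 n p xh \<le> (\<Sum>i\<in>S. bnorm n (xh - x) i) - (\<Sum>i\<in>{..<p}-S. bnorm n (xh - x) i)
       + 2 * (\<Sum>i\<in>{..<p}-S. bnorm n (x - z) i)" .
  have "(\<Sum>i\<in>{..<p}-S. bnorm n (x - z) i) \<le> norm21 n p (x - z)"
    unfolding norm21_def by (intro sum_mono2) (auto simp: bnorm_nonneg)
  then show ?thesis using X by linarith
qed

lemma norm21_split:
  assumes "S \<subseteq> {..<p}"
  shows "norm21 n p h = (\<Sum>i\<in>S. bnorm n h i) + (\<Sum>i\<in>{..<p}-S. bnorm n h i)"
  unfolding norm21_def using assms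
  by (metis (no_types, lifting) add.commute finite_lessThan sum.subset_diff)


lemma idx_lt: assumes "i < k" "j < (n::nat)" shows "i*n+j < k*n"
proof -
  have "i*n + j < i*n + n" using assms(2) by simp
  also have "\<dots> = Suc i * n" by simp
  also have "\<dots> \<le> k * n" using assms(1) by (intro mult_le_mono1) simp
  finally show ?thesis .
qed

lemma phi_ne:
  assumes "1 \<le> n" "k \<le> p"
  shows "\<exists>z. in_RN (p*n) z \<and> norm20 n p z = k"
proof -
  define z0 :: "nat \<Rightarrow> real" where "z0 = (\<lambda>j. if j < k*n then 1 else 0)"
  have "k*n \<le> p*n" using assms(2) by (rule mult_le_mono1)
  then have "in_RN (p*n) z0" unfolding in_RN_def z0_def
    by (metis (no_types) leD order_trans)
  moreover have "{i. i < p \<and> bnorm n z0 i \<noteq> 0} = {..<k}"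
  proof (intro set_eqI iffI)
    fix i assume i: "i \<in> {i. i < p \<and> bnorm n z0 i \<noteq> 0}"
    show "i \<in> {..<k}"
    proof (rule ccontr)
      assume "i \<notin> {..<k}"
      then have "k*n \<le> i*n + j" for j by (simp add: mult_le_mono1 trans_le_add1)
      then have "bnorm n z0 i = 0" unfolding bnorm_def z0_def
        by (simp add: not_less[symmetric])
      then show False using i by simp
    qed
  next
    fix i assume i: "i \<in> {..<k}"
    have "bnorm n z0 i = sqrt (\<Sum>j<n. 1)"
      unfolding bnorm_def z0_def using idx_lt[of i k] i by (intro arg_cong[where f=sqrt] sum.cong) auto
    then have "bnorm n z0 i \<noteq> 0" using assms(1) by simp
    then show "i \<in> {i. i < p \<and> bnorm n z0 i \<noteq> 0}" using i assms(2) by auto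
  qed
  ultimately show ?thesis unfolding norm20_def by auto
qed

lemma phi_ge:
  assumes "1 \<le> n" "k \<le> p"
    and "\<And>z. in_RN (p*n) z \<Longrightarrow> norm20 n p z = k \<Longrightarrow> c \<le> norm21 n p (x - z)"
  shows "c \<le> phi n p k x"
  unfolding phi_def using phi_ne[OF assms(1,2)] assms(3)
  by (intro cInf_greatest) auto

lemma phi_nonneg: assumes "1 \<le> n" "k \<le> p" shows "0 \<le> phi n p k x"
  by (rule phi_ge[OF assms]) (rule norm21_nonneg)

lemma norm2_nonneg: "0 \<le> norm2 m v"
  by (simp add: norm2_def sum_nonneg)

lemma beta_le:
  assumes "in_RN (p*n) h" "h \<noteq> (\<lambda>_. 0)" "kq n p q h \<le> s" "0 < p"
  shows "beta n p m q s A \<le> norm2 m (matvec (p*n) A h) / mixnorm n p q h"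
  unfolding beta_def
proof (rule cInf_lower)
  show "bdd_below {norm2 m (matvec (p * n) A z) / mixnorm n p q z |z.
          in_RN (p * n) z \<and> z \<noteq> (\<lambda>_. 0) \<and> kq n p q z \<le> s}"
    by (rule bdd_belowI[of _ 0]) (auto intro!: divide_nonneg_nonneg norm2_nonneg mixnorm_nonneg assms(4))
qed (use assms in auto)

lemma exp_one: assumes "1 < q" shows "(1 - invq q) * qexp q = 1"
  using assms by (cases rule: q_cases) (auto simp: invq_def qexp_def field_simps)

lemma qexp_pos: assumes "1 < q" shows "0 < qexp q"
  using assms by (cases rule: q_cases) (auto simp: qexp_def)

lemma kq_bound:
  assumes "0 < mixnorm n p q h" "norm21 n p h \<le> c * (real k powr (1 - invq q)) * mixnorm n p q h"
    "0 < c" "1 \<le> k" "1 < q"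
  shows "kq n p q h \<le> c powr qexp q * real k"
proof -
  have "norm21 n p h / mixnorm n p q h \<le> c * real k powr (1 - invq q)"
    using assms(1,2) by (simp add: divide_le_eq)
  then have "kq n p q h \<le> (c * real k powr (1 - invq q)) powr qexp q"
    unfolding kq_def using qexp_pos[OF assms(5)] assms(1)
    by (intro powr_mono2) (auto intro: divide_nonneg_nonneg norm21_nonneg)
  also have "\<dots> = c powr qexp q * (real k powr (1 - invq q)) powr qexp q"
    using assms(3) by (simp add: powr_mult)
  also have "(real k powr (1 - invq q)) powr qexp q = real k"
    using assms(4) by (simp add: powr_powr exp_one[OF assms(5)])
  finally show ?thesis .
qed

lemma final_arith:
  fixes L M K C E ph :: real
  assumes "L \<le> C*(K*M + ph)" "0 \<le> ph" "0 < K" "0 \<le> M" "0 < C"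
    "ph \<le> K*M \<Longrightarrow> M \<le> E" "0 \<le> E"
  shows "M \<le> E + ph/K \<and> L \<le> C*K*E + 2*C*ph"
proof (cases "ph \<le> K*M")
  case True
  then have ME: "M \<le> E" using assms(6) by simp
  have "L \<le> C*(K*E + ph)" using assms(1,3,5) ME
    by (smt (verit) mult_left_mono)
  moreover have "0 \<le> ph / K" using assms by simp
  moreover have "0 \<le> C * ph" using assms by simp
  ultimately show ?thesis using ME by (simp add: algebra_simps)
next
  case False
  then have "M < ph/K" using assms(3) by (simp add: field_simps)
  moreover have "L \<le> C*(2*ph)" using assms(1,5) False by (smt (verit) mult_left_mono)
  moreover have "0 \<le> C*K*E" using assms by simp
  ultimately show ?thesis using assms(7) by (simp add: algebra_simps)
qed

lemma cone:
  assumes "1 \<le> n" "1 \<le> k" "k \<le> p" "1 < q"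
    "- \<kappa> * norm21 n p (xh - x) \<le> norm21 n p x - norm21 n p xh"
  shows "(1-\<kappa>) * norm21 n p (xh - x) \<le> 2 * (real k powr (1 - invq q) * mixnorm n p q (xh - x)) + 2 * phi n p k x"
proof -
  let ?L = "norm21 n p (xh - x)"
  let ?a = "real k powr (1 - invq q) * mixnorm n p q (xh - x)"
  have "((1-\<kappa>) * ?L - 2 * ?a) / 2 \<le> phi n p k x"
  proof (rule phi_ge[OF assms(1,3)])
    fix z assume z: "in_RN (p*n) z" "norm20 n p z = k"
    define S where "S = {i. i < p \<and> bnorm n z i \<noteq> 0}"
    have SS: "S \<subseteq> {..<p}" by (auto simp: S_def)
    have cS: "card S = k" using z(2) by (simp add: norm20_def S_def)
    have C: "norm21 n p x - norm21 n p xh \<le> (\<Sum>i\<in>S. bnorm n (xh - x) i)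
           - (\<Sum>i\<in>{..<p}-S. bnorm n (xh - x) i) + 2 * norm21 n p (x - z)"
      unfolding S_def by (rule core)
    have H: "(\<Sum>i\<in>S. bnorm n (xh - x) i) \<le> ?a"
      using assms cS by (intro holder_block[OF SS]) auto
    have Sp: "?L = (\<Sum>i\<in>S. bnorm n (xh - x) i) + (\<Sum>i\<in>{..<p}-S. bnorm n (xh - x) i)"
      by (rule norm21_split[OF SS])
    show "((1-\<kappa>) * ?L - 2 * ?a) / 2 \<le> norm21 n p (x - z)"
      using C H Sp assms(5) by (simp add: algebra_simps)
  qed
  then show ?thesis by simp
qed


lemma matvec_diff: "matvec N A (u - v) = matvec N A u - matvec N A v"
  by (simp add: matvec_def fun_diff_def sum_subtractf right_diff_distrib fun_eq_iff)

lemma tmatvec_diff: "tmatvec m A (u - v) = tmatvec m A u - tmatvec m A v"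
  by (simp add: tmatvec_def fun_diff_def sum_subtractf right_diff_distrib fun_eq_iff)

lemma tmatvec_cong: "(\<And>i. i < m \<Longrightarrow> u i = v i) \<Longrightarrow> tmatvec m A u = tmatvec m A v"
  by (simp add: tmatvec_def fun_eq_iff)

lemma norm2_cong: "(\<And>i. i < m \<Longrightarrow> u i = v i) \<Longrightarrow> norm2 m u = norm2 m v"
  by (simp add: norm2_def)

lemma norm2_sq: "(norm2 m v)^2 = (\<Sum>i<m. (v i)^2)"
  by (simp add: norm2_def sum_nonneg)

lemma norm2_diff_le: "norm2 m (u - v) \<le> norm2 m u + norm2 m v"
proof -
  have "norm2 m (u - v) = L2_set (\<lambda>i. u i + (- v i)) {..<m}"
    by (simp add: norm2_def L2_set_def)
  also have "\<dots> \<le> L2_set u {..<m} + L2_set (\<lambda>i. - v i) {..<m}"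
    by (rule L2_set_triangle_ineq)
  also have "\<dots> = norm2 m u + norm2 m v"
    by (simp add: norm2_def L2_set_def)
  finally show ?thesis .
qed

lemma mixnorm_inf_diff_le:
  assumes "0 < p"
  shows "mixnorm n p \<infinity> (u - v) \<le> mixnorm n p \<infinity> u + mixnorm n p \<infinity> v"
proof -
  have "bnorm n (u - v) i \<le> Max (bnorm n u ` {..<p}) + Max (bnorm n v ` {..<p})" if "i < p" for i
  proof -
    have "bnorm n u i \<le> Max (bnorm n u ` {..<p})" "bnorm n v i \<le> Max (bnorm n v ` {..<p})"
      using that by (auto intro!: Max_ge)
    then show ?thesis using bnorm_diff_le[of n u v i] by linarith
  qed
  then show ?thesis using assms by (simp add: mixnorm_def Max_le_iff lessThan_empty_iff)
qed

lemma bnorm_block_le_mixnorm: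
  assumes "i < p" shows "bnorm n g i \<le> mixnorm n p \<infinity> g"
  using assms by (simp add: mixnorm_def)

lemma mixnorm_zero: assumes "0 < p" shows "mixnorm n p q (\<lambda>_. 0) = 0"
  using assms by (auto simp: mixnorm_def bnorm_def image_constant_conv lessThan_empty_iff)

lemma sq_AtAh:
  assumes "0 < p"
  shows "(norm2 m (matvec (p*n) A h))^2 \<le> norm21 n p h * mixnorm n p \<infinity> (tmatvec m A (matvec (p*n) A h))"
proof -
  have "(norm2 m (matvec (p*n) A h))^2 = (\<Sum>l<m. (matvec (p*n) A h l)^2)"
    by (rule norm2_sq)
  also have "\<dots> = (\<Sum>l<m. matvec (p*n) A h l * matvec (p*n) A h l)"
    by (simp add: power2_eq_square)
  also have "\<dots> = (\<Sum>j<p*n. h j * tmatvec m A (matvec (p*n) A h) j)"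
    by (rule bilinear)
  also have "\<dots> \<le> norm21 n p h * mixnorm n p \<infinity> (tmatvec m A (matvec (p*n) A h))"
    by (rule block_cs[OF assms])
  finally show ?thesis .
qed

lemma block_idx:
  assumes "j < (n::nat)"
  shows "(i*n \<le> i'*n+j \<and> i'*n+j < i*n+n) \<longleftrightarrow> i' = i"
proof
  assume H: "i*n \<le> i'*n+j \<and> i'*n+j < i*n+n"
  show "i' = i"
  proof (rule ccontr)
    assume "i' \<noteq> i"
    then consider "i' < i" | "i < i'" by linarith
    then show False
    proof cases
      case 1
      then have "i'*n + j < i*n" using idx_lt[OF 1 assms] by simp
      then show False using H by simp
    next
      case 2
      then have "Suc i * n \<le> i' * n" by (intro mult_le_mono1) simp
      then show False using H by simp
    qed
  qed
qed (use assms in simp)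


lemma lasso_kkt:
  assumes sol: "lasso_sol n p m A y \<mu> xh" and mu: "0 < \<mu>" and p: "0 < p"
  shows "mixnorm n p \<infinity> (tmatvec m A (y - matvec (p*n) A xh)) \<le> \<mu>"
proof -
  define r where "r = y - matvec (p*n) A xh"
  define g where "g = tmatvec m A r"
  have xh: "in_RN (p*n) xh" using sol by (simp add: lasso_sol_def)
  have blk: "bnorm n g i \<le> \<mu>" if i: "i < p" for i
  proof (rule ccontr)
    assume "\<not> bnorm n g i \<le> \<mu>"
    then have Gmu: "\<mu> < bnorm n g i" by simp
    define G where "G = bnorm n g i"
    define d where "d = (\<lambda>j. if i*n \<le> j \<and> j < i*n+n then g j else 0)"
    define w where "w = matvec (p*n) A d"
    define D where "D = (\<Sum>l<m. (w l)^2)"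
    have D0: "0 \<le> D" unfolding D_def by (intro sum_nonneg) auto
    have G0: "0 \<le> G" unfolding G_def by (rule bnorm_nonneg)
    have dblk: "d (i'*n+j) = (if i' = i then g (i'*n+j) else 0)" if "j < n" for i' j
      unfolding d_def using block_idx[OF that, of i i'] by auto
    have bd: "bnorm n d i' = (if i' = i then G else 0)" for i'
      unfolding bnorm_def G_def by (simp add: dblk)
    have "(\<Sum>l<m. r l * w l) = (\<Sum>j<p*n. d j * g j)"
      unfolding w_def g_def by (rule bilinear)
    also have "\<dots> = (\<Sum>i'<p. \<Sum>j<n. d (i'*n+j) * g (i'*n+j))" by (rule sum_blocks)
    also have "\<dots> = (\<Sum>i'<p. if i' = i then (\<Sum>j<n. (g (i*n+j))^2) else 0)"
      by (intro sum.cong refl) (auto simp: dblk power2_eq_square)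
    also have "\<dots> = (\<Sum>j<n. (g (i*n+j))^2)" using i by simp
    also have "\<dots> = G^2" unfolding G_def bnorm_def by (simp add: sum_nonneg)
    finally have rw: "(\<Sum>l<m. r l * w l) = G^2" .
    have obj: "G^2 - \<mu> * G \<le> t / 2 * D" if t: "0 < t" for t
    proof -
      define z where "z = (\<lambda>j. xh j + t * d j)"
      have zin: "in_RN (p*n) z"
      proof -
        have "Suc i * n \<le> p * n" using i by (intro mult_le_mono1) simp
        then show ?thesis using xh unfolding in_RN_def z_def d_def by auto
      qed
      have le: "lasso_obj n p m A y \<mu> xh \<le> lasso_obj n p m A y \<mu> z"
        using sol zin by (simp add: lasso_sol_def)
      have mz: "y - matvec (p*n) A z = (\<lambda>l. r l - t * w l)"
        unfolding r_def w_def z_def matvec_def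
        by (simp add: fun_eq_iff fun_diff_def sum.distrib sum_distrib_left algebra_simps)
      have n2z: "(norm2 m (y - matvec (p*n) A z))^2 = (\<Sum>l<m. (r l)^2) - 2 * t * G^2 + t^2 * D"
      proof -
        have "(norm2 m (y - matvec (p*n) A z))^2 = (\<Sum>l<m. (r l - t * w l)^2)"
          unfolding mz by (rule norm2_sq)
        also have "\<dots> = (\<Sum>l<m. (r l)^2 - 2 * t * (r l * w l) + t^2 * (w l)^2)"
          by (intro sum.cong refl) (simp add: power2_eq_square algebra_simps)
        also have "\<dots> = (\<Sum>l<m. (r l)^2) - 2 * t * (\<Sum>l<m. r l * w l) + t^2 * D"
          by (simp add: sum.distrib sum_subtractf sum_distrib_left D_def)
        finally show ?thesis using rw by simp
      qed
      have n2x: "(norm2 m (y - matvec (p*n) A xh))^2 = (\<Sum>l<m. (r l)^2)"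
        unfolding r_def[symmetric] by (rule norm2_sq)
      have n21: "norm21 n p z \<le> norm21 n p xh + t * G"
      proof -
        have "norm21 n p z \<le> (\<Sum>i'<p. bnorm n xh i' + bnorm n (\<lambda>j. t * d j) i')"
          unfolding norm21_def z_def by (intro sum_mono bnorm_add_le)
        also have "\<dots> = norm21 n p xh + t * (\<Sum>i'<p. bnorm n d i')"
          using t by (simp add: norm21_def bnorm_smult sum.distrib sum_distrib_left)
        also have "(\<Sum>i'<p. bnorm n d i') = G" using i by (simp add: bd)
        finally show ?thesis .
      qed
      have "lasso_obj n p m A y \<mu> z \<le> 1/2 * ((\<Sum>l<m. (r l)^2) - 2 * t * G^2 + t^2 * D) + \<mu> * (norm21 n p xh + t * G)"
        unfolding lasso_obj_def n2z using n21 mu by (intro add_left_mono mult_left_mono) auto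
      moreover have "lasso_obj n p m A y \<mu> xh = 1/2 * (\<Sum>l<m. (r l)^2) + \<mu> * norm21 n p xh"
        unfolding lasso_obj_def n2x ..
      ultimately have "0 \<le> t * (t / 2 * D - (G^2 - \<mu> * G))"
        using le by (simp add: algebra_simps power2_eq_square)
      then have "0 \<le> t / 2 * D - (G^2 - \<mu> * G)" using t by (simp add: zero_le_mult_iff)
      then show ?thesis by simp
    qed
    define X where "X = G^2 - \<mu> * G"
    have X0: "0 < X" unfolding X_def G_def using Gmu mu
      by (simp add: power2_eq_square)
    have "X \<le> (X / (D+1)) / 2 * D" using obj[of "X / (D+1)"] X0 D0 unfolding X_def by simp
    also have "\<dots> < X"
    proof -
      have "(X / (D+1)) / 2 * D = X * (D / (2 * (D+1)))" by (simp add: field_simps)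
      also have "\<dots> < X * 1" using X0 D0 by (intro mult_strict_left_mono) (auto simp: field_simps)
      finally show ?thesis by simp
    qed
    finally show False by simp
  qed
  show ?thesis
    using blk p unfolding r_def[symmetric] g_def[symmetric]
    by (simp add: mixnorm_def lessThan_empty_iff)
qed


lemma bM_le:
  assumes "in_RN (p*n) h" "0 < p" "1 \<le> k" "1 < q" "0 < c"
    "norm21 n p h \<le> c * real k powr (1 - invq q) * mixnorm n p q h"
  shows "beta n p m q (c powr qexp q * real k) A * mixnorm n p q h \<le> norm2 m (matvec (p*n) A h)"
proof (cases "mixnorm n p q h = 0")
  case True
  then show ?thesis by (simp add: norm2_nonneg)
next
  case False
  then have M: "0 < mixnorm n p q h" using mixnorm_nonneg[OF assms(2)] by (simp add: order_less_le)
  have "h \<noteq> (\<lambda>_. 0)" using False mixnorm_zero[OF assms(2)] by auto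
  moreover have "kq n p q h \<le> c powr qexp q * real k"
    using kq_bound[OF M assms(6,5,3,4)] .
  ultimately have "beta n p m q (c powr qexp q * real k) A \<le> norm2 m (matvec (p*n) A h) / mixnorm n p q h"
    using beta_le assms(1,2) by blast
  then show ?thesis using M by (simp add: le_divide_eq)
qed

lemma in_RN_diff: "in_RN N u \<Longrightarrow> in_RN N v \<Longrightarrow> in_RN N (u - v)"
  by (simp add: in_RN_def)

lemma K_facts:
  assumes "1 \<le> k"
  shows "0 < real k powr (1 - invq q)"
    "real k powr (invq q - 1) * ph = ph / real k powr (1 - invq q)"
    "real k powr (2 - 2 * invq q) = (real k powr (1 - invq q))^2"
proof -
  show "0 < real k powr (1 - invq q)" using assms by simp
  have "invq q - 1 = - (1 - invq q)" by simp
  then show "real k powr (invq q - 1) * ph = ph / real k powr (1 - invq q)"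
    using assms by (simp only: powr_minus_divide) simp
  have "2 - 2 * invq q = (1 - invq q) + (1 - invq q)" by simp
  then show "real k powr (2 - 2 * invq q) = (real k powr (1 - invq q))^2"
    using assms by (simp only: powr_add power2_eq_square)
qed

lemma Ah_eq: "matvec N A (xh - x) = (y - matvec N A x) - (y - matvec N A xh)"
  unfolding matvec_diff by (simp add: fun_eq_iff)

lemma part1:
  assumes n1: "1 \<le> n" and k1: "1 \<le> k" and kp: "k \<le> p" and xin: "in_RN (p*n) x"
    and y: "\<forall>i<m. y i = matvec (p*n) A x i + eps i" and q: "1 < q"
    and e: "norm2 m eps \<le> \<zeta>" and sol: "bp_sol n p m A y \<zeta> xh"
    and b: "0 < beta n p m q (4 powr qexp q * real k) A"
  shows "mixnorm n p q (xh - x) \<le> 2 * \<zeta> / beta n p m q (4 powr qexp q * real k) A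
              + real k powr (invq q - 1) * phi n p k x \<and>
         norm21 n p (xh - x) \<le> 4 * real k powr (1 - invq q) * \<zeta> / beta n p m q (4 powr qexp q * real k) A
              + 4 * phi n p k x"
proof -
  define bb where "bb = beta n p m q (4 powr qexp q * real k) A"
  define L where "L = norm21 n p (xh - x)"
  define M where "M = mixnorm n p q (xh - x)"
  define K where "K = real k powr (1 - invq q)"
  define ph where "ph = phi n p k x"
  have p0: "0 < p" using k1 kp by simp
  have K0: "0 < K" unfolding K_def using K_facts(1)[OF k1] .
  have ph0: "0 \<le> ph" unfolding ph_def using phi_nonneg[OF n1 kp] .
  have M0: "0 \<le> M" unfolding M_def using mixnorm_nonneg[OF p0] .
  have xhin: "in_RN (p*n) xh" and xhf: "norm2 m (y - matvec (p*n) A xh) \<le> \<zeta>"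
    using sol by (auto simp: bp_sol_def)
  have yx: "norm2 m (y - matvec (p*n) A x) = norm2 m eps"
    using y by (intro norm2_cong) simp
  have "norm21 n p xh \<le> norm21 n p x"
    using sol xin yx e by (simp add: bp_sol_def)
  then have "- 0 * L \<le> norm21 n p x - norm21 n p xh" by (simp add: L_def)
  from cone[OF n1 k1 kp q this[unfolded L_def]]
  have cn: "L \<le> 2 * (K * M + ph)" by (simp add: L_def K_def M_def ph_def)
  have Ah: "norm2 m (matvec (p*n) A (xh - x)) \<le> 2 * \<zeta>"
    using norm2_diff_le[of m "y - matvec (p*n) A x" "y - matvec (p*n) A xh"] yx e xhf
    unfolding Ah_eq[of "p*n" A xh x y] by linarith
  have bpos: "0 < bb" using b by (simp add: bb_def)
  have caseA: "M \<le> 2 * \<zeta> / bb" if "ph \<le> K * M"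
  proof -
    have "L \<le> 4 * K * M" using cn that by simp
    then have "bb * M \<le> norm2 m (matvec (p*n) A (xh - x))"
      unfolding bb_def M_def L_def K_def
      by (intro bM_le in_RN_diff xhin xin p0 k1 q) auto
    then have "bb * M \<le> 2 * \<zeta>" using Ah by simp
    then show ?thesis using bpos by (simp add: le_divide_eq mult.commute)
  qed
  have E0: "0 \<le> 2 * \<zeta> / bb" using bpos M0 caseA e norm2_nonneg[of m eps] by simp
  have F: "M \<le> 2 * \<zeta> / bb + ph / K \<and> L \<le> 2 * K * (2 * \<zeta> / bb) + 2 * 2 * ph"
    by (rule final_arith[OF cn ph0 K0 M0 _ caseA E0]) simp_all
  show ?thesis
    using F K_facts(2)[OF k1, of q ph]
    by (simp add: bb_def[symmetric] L_def[symmetric] M_def[symmetric] K_def[symmetric] ph_def[symmetric])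
qed


lemma AtAh_le:
  assumes "0 < p"
    "mixnorm n p \<infinity> (tmatvec m A (y - matvec (p*n) A x)) \<le> a"
    "mixnorm n p \<infinity> (tmatvec m A (y - matvec (p*n) A xh)) \<le> c"
  shows "(norm2 m (matvec (p*n) A (xh - x)))^2 \<le> norm21 n p (xh - x) * (a + c)"
proof -
  have "(norm2 m (matvec (p*n) A (xh - x)))^2 \<le> norm21 n p (xh - x) * mixnorm n p \<infinity> (tmatvec m A (matvec (p*n) A (xh - x)))"
    by (rule sq_AtAh[OF assms(1)])
  also have "tmatvec m A (matvec (p*n) A (xh - x)) = tmatvec m A (y - matvec (p*n) A x) - tmatvec m A (y - matvec (p*n) A xh)"
    unfolding Ah_eq[of "p*n" A xh x y] by (rule tmatvec_diff)
  also have "norm21 n p (xh - x) * mixnorm n p \<infinity> (tmatvec m A (y - matvec (p*n) A x) - tmatvec m A (y - matvec (p*n) A xh))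
      \<le> norm21 n p (xh - x) * (a + c)"
    using mixnorm_inf_diff_le[OF assms(1), of n "tmatvec m A (y - matvec (p*n) A x)" "tmatvec m A (y - matvec (p*n) A xh)"] assms(2,3)
    by (intro mult_left_mono norm21_nonneg) auto
  finally show ?thesis .
qed

lemma quad_bound:
  fixes bb M S c :: real
  assumes "0 < bb" "0 \<le> M" "bb * M \<le> S" "S^2 \<le> c * M" "0 \<le> c"
  shows "M \<le> c / bb^2"
proof (cases "M = 0")
  case True
  then show ?thesis using assms(1,5) by simp
next
  case False
  then have Mp: "0 < M" using assms(2) by simp
  have "(bb * M)^2 \<le> S^2" using assms(1,2,3) by (intro power_mono) auto
  then have "bb^2 * M * M \<le> c * M" using assms(4) by (simp add: power2_eq_square algebra_simps)
  then have "bb^2 * M \<le> c" using Mp by simp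
  then show ?thesis using assms(1) by (simp add: field_simps)
qed


lemma part2:
  assumes n1: "1 \<le> n" and k1: "1 \<le> k" and kp: "k \<le> p" and xin: "in_RN (p*n) x"
    and y: "\<forall>i<m. y i = matvec (p*n) A x i + eps i" and q: "1 < q" and mu: "0 < \<mu>"
    and e: "mixnorm n p \<infinity> (tmatvec m A eps) \<le> \<mu>" and sol: "ds_sol n p m A y \<mu> xh"
    and b: "0 < beta n p m q (4 powr qexp q * real k) A"
  shows "mixnorm n p q (xh - x) \<le> 8 * real k powr (1 - invq q) / (beta n p m q (4 powr qexp q * real k) A)^2 * \<mu>
              + real k powr (invq q - 1) * phi n p k x \<and>
         norm21 n p (xh - x) \<le> 16 * real k powr (2 - 2 * invq q) / (beta n p m q (4 powr qexp q * real k) A)^2 * \<mu>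
              + 4 * phi n p k x"
proof -
  define bb where "bb = beta n p m q (4 powr qexp q * real k) A"
  define L where "L = norm21 n p (xh - x)"
  define M where "M = mixnorm n p q (xh - x)"
  define K where "K = real k powr (1 - invq q)"
  define ph where "ph = phi n p k x"
  define S where "S = norm2 m (matvec (p*n) A (xh - x))"
  have p0: "0 < p" using k1 kp by simp
  have K0: "0 < K" unfolding K_def using K_facts(1)[OF k1] .
  have ph0: "0 \<le> ph" unfolding ph_def using phi_nonneg[OF n1 kp] .
  have M0: "0 \<le> M" unfolding M_def using mixnorm_nonneg[OF p0] .
  have L0: "0 \<le> L" unfolding L_def by (rule norm21_nonneg)
  have xhin: "in_RN (p*n) xh" and xhf: "mixnorm n p \<infinity> (tmatvec m A (y - matvec (p*n) A xh)) \<le> \<mu>"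
    using sol by (auto simp: ds_sol_def)
  have yx: "tmatvec m A (y - matvec (p*n) A x) = tmatvec m A eps"
    using y by (intro tmatvec_cong) simp
  have "norm21 n p xh \<le> norm21 n p x"
    using sol xin yx e by (simp add: ds_sol_def)
  then have "- 0 * L \<le> norm21 n p x - norm21 n p xh" by (simp add: L_def)
  from cone[OF n1 k1 kp q this[unfolded L_def]]
  have cn: "L \<le> 2 * (K * M + ph)" by (simp add: L_def K_def M_def ph_def)
  have sq: "S^2 \<le> L * (\<mu> + \<mu>)"
    unfolding S_def L_def using yx e xhf by (intro AtAh_le p0) auto
  have bpos: "0 < bb" using b by (simp add: bb_def)
  have caseA: "M \<le> 8 * K / bb^2 * \<mu>" if "ph \<le> K * M"
  proof -
    have L4: "L \<le> 4 * K * M" using cn that by simp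
    then have bm: "bb * M \<le> S"
      unfolding bb_def M_def L_def K_def S_def
      by (intro bM_le in_RN_diff xhin xin p0 k1 q) auto
    have "S^2 \<le> 4 * K * M * (\<mu> + \<mu>)" using sq L4 mu by (smt (verit) mult_right_mono)
    then have "S^2 \<le> (8 * K * \<mu>) * M" by (simp add: algebra_simps)
    then have "M \<le> (8 * K * \<mu>) / bb^2" using quad_bound[OF bpos M0 bm] K0 mu by simp
    then show ?thesis by simp
  qed
  have E0: "0 \<le> 8 * K / bb^2 * \<mu>" using bpos K0 mu by simp
  have F: "M \<le> 8 * K / bb^2 * \<mu> + ph / K \<and> L \<le> 2 * K * (8 * K / bb^2 * \<mu>) + 2 * 2 * ph"
    by (rule final_arith[OF cn ph0 K0 M0 _ caseA E0]) simp_all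
  have "2 * K * (8 * K / bb^2 * \<mu>) = 16 * K^2 / bb^2 * \<mu>" by (simp add: power2_eq_square)
  then have F2: "L \<le> 16 * K^2 / bb^2 * \<mu> + 4 * ph" using F by linarith
  have F1: "M \<le> 8 * K / bb^2 * \<mu> + real k powr (invq q - 1) * ph"
    using F K_facts(2)[OF k1, of q ph] unfolding K_def by simp
  show ?thesis
    using F1 F2 K_facts(3)[OF k1, of q]
    unfolding bb_def L_def M_def K_def ph_def by simp
qed


lemma part3:
  assumes n1: "1 \<le> n" and k1: "1 \<le> k" and kp: "k \<le> p" and xin: "in_RN (p*n) x"
    and y: "\<forall>i<m. y i = matvec (p*n) A x i + eps i" and q: "1 < q" and mu: "0 < \<mu>"
    and ka: "0 < \<kappa>" "\<kappa> < 1"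
    and e: "mixnorm n p \<infinity> (tmatvec m A eps) \<le> \<kappa> * \<mu>" and sol: "lasso_sol n p m A y \<mu> xh"
    and b: "0 < beta n p m q ((4 / (1 - \<kappa>)) powr qexp q * real k) A"
  shows "mixnorm n p q (xh - x) \<le> (1 + \<kappa>) / (1 - \<kappa>) * (4 * real k powr (1 - invq q) / (beta n p m q ((4 / (1 - \<kappa>)) powr qexp q * real k) A)^2) * \<mu>
              + real k powr (invq q - 1) * phi n p k x \<and>
         norm21 n p (xh - x) \<le> (1 + \<kappa>) / (1 - \<kappa>)^2 * (8 * real k powr (2 - 2 * invq q) / (beta n p m q ((4 / (1 - \<kappa>)) powr qexp q * real k) A)^2) * \<mu>
              + 4 / (1 - \<kappa>) * phi n p k x"
proof -
  define bb where "bb = beta n p m q ((4 / (1 - \<kappa>)) powr qexp q * real k) A"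
  define L where "L = norm21 n p (xh - x)"
  define M where "M = mixnorm n p q (xh - x)"
  define K where "K = real k powr (1 - invq q)"
  define ph where "ph = phi n p k x"
  define S where "S = norm2 m (matvec (p*n) A (xh - x))"
  define w where "w = matvec (p*n) A (xh - x)"
  have p0: "0 < p" using k1 kp by simp
  have K0: "0 < K" unfolding K_def using K_facts(1)[OF k1] .
  have ph0: "0 \<le> ph" unfolding ph_def using phi_nonneg[OF n1 kp] .
  have M0: "0 \<le> M" unfolding M_def using mixnorm_nonneg[OF p0] .
  have L0: "0 \<le> L" unfolding L_def by (rule norm21_nonneg)
  have xhin: "in_RN (p*n) xh" using sol by (simp add: lasso_sol_def)
  have kkt: "mixnorm n p \<infinity> (tmatvec m A (y - matvec (p*n) A xh)) \<le> \<mu>"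
    by (rule lasso_kkt[OF sol mu p0])
  have yx: "tmatvec m A (y - matvec (p*n) A x) = tmatvec m A eps"
    using y by (intro tmatvec_cong) simp
  have objle: "lasso_obj n p m A y \<mu> xh \<le> lasso_obj n p m A y \<mu> x"
    using sol xin by (simp add: lasso_sol_def)
  have n2x: "(norm2 m (y - matvec (p*n) A x))^2 = (\<Sum>l<m. (eps l)^2)"
  proof -
    have "norm2 m (y - matvec (p*n) A x) = norm2 m eps" using y by (intro norm2_cong) simp
    then show ?thesis by (simp add: norm2_sq)
  qed
  have n2xh: "(norm2 m (y - matvec (p*n) A xh))^2 = (\<Sum>l<m. (eps l)^2) - 2 * (\<Sum>l<m. eps l * w l) + (\<Sum>l<m. (w l)^2)"
  proof -
    have "norm2 m (y - matvec (p*n) A xh) = norm2 m (\<lambda>l. eps l - w l)"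
      using y unfolding w_def matvec_diff by (intro norm2_cong) simp
    then have "(norm2 m (y - matvec (p*n) A xh))^2 = (\<Sum>l<m. (eps l - w l)^2)" by (simp add: norm2_sq)
    also have "\<dots> = (\<Sum>l<m. (eps l)^2 - 2 * (eps l * w l) + (w l)^2)"
      by (intro sum.cong refl) (simp add: power2_eq_square algebra_simps)
    also have "\<dots> = (\<Sum>l<m. (eps l)^2) - 2 * (\<Sum>l<m. eps l * w l) + (\<Sum>l<m. (w l)^2)"
      by (simp add: sum.distrib sum_subtractf sum_distrib_left)
    finally show ?thesis .
  qed
  have ew: "(\<Sum>l<m. eps l * w l) \<le> L * (\<kappa> * \<mu>)"
  proof -
    have "(\<Sum>l<m. eps l * w l) = (\<Sum>j<p*n. (xh - x) j * tmatvec m A eps j)"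
      unfolding w_def by (rule bilinear)
    also have "\<dots> \<le> L * mixnorm n p \<infinity> (tmatvec m A eps)"
      unfolding L_def by (rule block_cs[OF p0])
    also have "\<dots> \<le> L * (\<kappa> * \<mu>)" using e L0 by (intro mult_left_mono) auto
    finally show ?thesis .
  qed
  have w0: "0 \<le> (\<Sum>l<m. (w l)^2)" by (intro sum_nonneg) auto
  have "1/2 * (norm2 m (y - matvec (p*n) A xh))^2 + \<mu> * norm21 n p xh
      \<le> 1/2 * (norm2 m (y - matvec (p*n) A x))^2 + \<mu> * norm21 n p x"
    using objle by (simp add: lasso_obj_def)
  then have "1/2 * (\<Sum>l<m. (w l)^2) \<le> (\<Sum>l<m. eps l * w l) + \<mu> * (norm21 n p x - norm21 n p xh)"
    unfolding n2x n2xh by (simp add: algebra_simps)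
  then have "0 \<le> L * (\<kappa> * \<mu>) + \<mu> * (norm21 n p x - norm21 n p xh)" using ew w0 by linarith
  then have "0 \<le> \<mu> * (\<kappa> * L + (norm21 n p x - norm21 n p xh))" by (simp add: algebra_simps)
  then have "0 \<le> \<kappa> * L + (norm21 n p x - norm21 n p xh)" using mu by (simp add: zero_le_mult_iff)
  then have "- \<kappa> * L \<le> norm21 n p x - norm21 n p xh" by simp
  from cone[OF n1 k1 kp q this[unfolded L_def]]
  have cn0: "(1 - \<kappa>) * L \<le> 2 * (K * M + ph)" by (simp add: L_def K_def M_def ph_def)
  define C where "C = 2 / (1 - \<kappa>)"
  have C0: "0 < C" using ka by (simp add: C_def)
  have cn: "L \<le> C * (K * M + ph)" using cn0 ka by (simp add: C_def field_simps)
  have sq: "S^2 \<le> L * (\<kappa> * \<mu> + \<mu>)"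
    unfolding S_def L_def using yx e kkt by (intro AtAh_le p0) auto
  have bpos: "0 < bb" using b by (simp add: bb_def)
  define E where "E = (1 + \<kappa>) / (1 - \<kappa>) * (4 * K / bb^2) * \<mu>"
  have E0: "0 \<le> E" using bpos K0 mu ka by (simp add: E_def)
  have caseA: "M \<le> E" if "ph \<le> K * M"
  proof -
    have "L \<le> C * (2 * (K * M))" using cn that C0 by (smt (verit) mult_left_mono)
    then have L4: "L \<le> (4 / (1 - \<kappa>)) * K * M" by (simp add: C_def)
    then have bm: "bb * M \<le> S"
      unfolding bb_def M_def L_def K_def S_def using ka
      by (intro bM_le in_RN_diff xhin xin p0 k1 q) auto
    have "L * (\<kappa> * \<mu> + \<mu>) \<le> (4 / (1 - \<kappa>)) * K * M * (\<kappa> * \<mu> + \<mu>)"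
      using L4 mu ka by (intro mult_right_mono) auto
    then have "S^2 \<le> (4 / (1 - \<kappa>)) * K * M * (\<kappa> * \<mu> + \<mu>)" using sq by linarith
    then have "S^2 \<le> ((4 / (1 - \<kappa>)) * K * (\<kappa> * \<mu> + \<mu>)) * M" by (simp add: algebra_simps)
    moreover have "0 \<le> (4 / (1 - \<kappa>)) * K * (\<kappa> * \<mu> + \<mu>)" using ka K0 mu by simp
    ultimately have "M \<le> ((4 / (1 - \<kappa>)) * K * (\<kappa> * \<mu> + \<mu>)) / bb^2"
      by (rule quad_bound[OF bpos M0 bm])
    also have "\<dots> = E" unfolding E_def using ka by (simp add: field_simps)
    finally show ?thesis .
  qed
  have F: "M \<le> E + ph / K \<and> L \<le> C * K * E + 2 * C * ph"
    by (rule final_arith[OF cn ph0 K0 M0 C0 caseA E0])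
  have eq: "C * K * E = (1 + \<kappa>) / (1 - \<kappa>)^2 * (8 * K^2 / bb^2) * \<mu>"
    unfolding C_def E_def using ka by (simp add: field_simps power2_eq_square)
  have eq2: "2 * C * ph = 4 / (1 - \<kappa>) * ph" unfolding C_def by simp
  have F2: "L \<le> (1 + \<kappa>) / (1 - \<kappa>)^2 * (8 * K^2 / bb^2) * \<mu> + 4 / (1 - \<kappa>) * ph"
    using F eq eq2 by linarith
  have F1: "M \<le> E + real k powr (invq q - 1) * ph"
    using F K_facts(2)[OF k1, of q ph] unfolding K_def by simp
  show ?thesis
    using F1 F2 K_facts(3)[OF k1, of q]
    unfolding bb_def L_def M_def K_def ph_def E_def by simp
qed

theorem theorem2:
  fixes n p m k :: nat and A :: "nat \<Rightarrow> nat \<Rightarrow> real"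
    and x y eps :: "nat \<Rightarrow> real" and q :: ereal and \<zeta> \<mu> :: real
  assumes "1 \<le> n" and "1 \<le> k" and "k \<le> p"
    and "in_RN (p * n) x"
    and "\<forall>i<m. y i = matvec (p * n) A x i + eps i"
    and "1 < q"
    and "0 \<le> \<zeta>" and "0 < \<mu>"
  shows
   "(norm2 m eps \<le> \<zeta> \<longrightarrow>
      (\<forall>xh. bp_sol n p m A y \<zeta> xh \<longrightarrow>
        (let b = beta n p m q (4 powr qexp q * real k) A in
         0 < b \<longrightarrow>
           mixnorm n p q (xh - x) \<le> 2 * \<zeta> / b + real k powr (invq q - 1) * phi n p k x \<and>
           norm21 n p (xh - x) \<le> 4 * real k powr (1 - invq q) * \<zeta> / b + 4 * phi n p k x)))
    \<and>
    (mixnorm n p \<infinity> (tmatvec m A eps) \<le> \<mu> \<longrightarrow>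
      (\<forall>xh. ds_sol n p m A y \<mu> xh \<longrightarrow>
        (let b = beta n p m q (4 powr qexp q * real k) A in
         0 < b \<longrightarrow>
           mixnorm n p q (xh - x) \<le> 8 * real k powr (1 - invq q) / b^2 * \<mu>
              + real k powr (invq q - 1) * phi n p k x \<and>
           norm21 n p (xh - x) \<le> 16 * real k powr (2 - 2 * invq q) / b^2 * \<mu>
              + 4 * phi n p k x)))
    \<and>
    (\<forall>\<kappa>::real. 0 < \<kappa> \<and> \<kappa> < 1 \<and> mixnorm n p \<infinity> (tmatvec m A eps) \<le> \<kappa> * \<mu> \<longrightarrow>
      (\<forall>xh. lasso_sol n p m A y \<mu> xh \<longrightarrow>
        (let b = beta n p m q ((4 / (1 - \<kappa>)) powr qexp q * real k) A in
         0 < b \<longrightarrow>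
           mixnorm n p q (xh - x) \<le> (1 + \<kappa>) / (1 - \<kappa>) * (4 * real k powr (1 - invq q) / b^2) * \<mu>
              + real k powr (invq q - 1) * phi n p k x \<and>
           norm21 n p (xh - x) \<le> (1 + \<kappa>) / (1 - \<kappa>)^2 * (8 * real k powr (2 - 2 * invq q) / b^2) * \<mu>
              + 4 / (1 - \<kappa>) * phi n p k x)))"
proof (intro conjI allI impI)
  fix xh assume "norm2 m eps \<le> \<zeta>" "bp_sol n p m A y \<zeta> xh"
  then show "let b = beta n p m q (4 powr qexp q * real k) A in
         0 < b \<longrightarrow>
           mixnorm n p q (xh - x) \<le> 2 * \<zeta> / b + real k powr (invq q - 1) * phi n p k x \<and>
           norm21 n p (xh - x) \<le> 4 * real k powr (1 - invq q) * \<zeta> / b + 4 * phi n p k x"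
    using part1[OF assms(1,2,3,4,5,6)] by (simp add: Let_def)
next
  fix xh assume "mixnorm n p \<infinity> (tmatvec m A eps) \<le> \<mu>" "ds_sol n p m A y \<mu> xh"
  then show "let b = beta n p m q (4 powr qexp q * real k) A in
         0 < b \<longrightarrow>
           mixnorm n p q (xh - x) \<le> 8 * real k powr (1 - invq q) / b^2 * \<mu>
              + real k powr (invq q - 1) * phi n p k x \<and>
           norm21 n p (xh - x) \<le> 16 * real k powr (2 - 2 * invq q) / b^2 * \<mu>
              + 4 * phi n p k x"
    using part2[OF assms(1,2,3,4,5,6,8)] by (simp add: Let_def)
next
  fix \<kappa> :: real and xh
  assume "0 < \<kappa> \<and> \<kappa> < 1 \<and> mixnorm n p \<infinity> (tmatvec m A eps) \<le> \<kappa> * \<mu>" "lasso_sol n p m A y \<mu> xh"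
  then show "let b = beta n p m q ((4 / (1 - \<kappa>)) powr qexp q * real k) A in
         0 < b \<longrightarrow>
           mixnorm n p q (xh - x) \<le> (1 + \<kappa>) / (1 - \<kappa>) * (4 * real k powr (1 - invq q) / b^2) * \<mu>
              + real k powr (invq q - 1) * phi n p k x \<and>
           norm21 n p (xh - x) \<le> (1 + \<kappa>) / (1 - \<kappa>)^2 * (8 * real k powr (2 - 2 * invq q) / b^2) * \<mu>
              + 4 / (1 - \<kappa>) * phi n p k x"
    using part3[OF assms(1,2,3,4,5,6,8)] by (simp add: Let_def)
qed

end
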